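(* $\liminf_{n\to\infty}D(n)=\frac12$. Consequently, for every real $u$ with $0\le u<\frac12$, the set $\mathcal{N}(u)=\{n\ge1: D(n)>u\}$ contains all but finitely many positive integers; in particular it has natural density and logarithmic density both equal to $1$.
   Context: A subset $S\subseteq \mathbb{Z}/n\mathbb{Z}$ is called product-free if there are no $a,b,c\in S$ (not necessarily distinct) with $ab\equiv c\pmod n$. For a positive integer $n$, $D(n)$ denotes the maximum of $|S|/n$ over all product-free subsets $S$ of $\mathbb{Z}/n\mathbb{Z}$. *)

theory Defs
  imports Complex_Main "HOL-Library.Extended_Real" "HOL-Library.Liminf_Limsup"
begin

text \<open>Residues of Z/nZ are represented by {0..<n}; a b \<equiv> c (mod n) for residues
  a, b, c means (a * b) mod n = c.\<close>
definition product_free :: "nat \<Rightarrow> nat set \<Rightarrow> bool" where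
  "product_free n S \<longleftrightarrow> S \<subseteq> {0..<n} \<and>
     \<not> (\<exists>a\<in>S. \<exists>b\<in>S. \<exists>c\<in>S. (a * b) mod n = c mod n)"

definition D :: "nat \<Rightarrow> real" where
  "D n = Max ((\<lambda>S. real (card S) / real n) ` {S. product_free n S})"

definition has_natural_density :: "nat set \<Rightarrow> real \<Rightarrow> bool" where
  "has_natural_density A d \<longleftrightarrow>
     (\<lambda>x. real (card (A \<inter> {1..x})) / real x) \<longlonglongrightarrow> d"

definition has_log_density :: "nat set \<Rightarrow> real \<Rightarrow> bool" where
  "has_log_density A d \<longleftrightarrow>
     (\<lambda>x. (\<Sum>k\<in>A \<inter> {1..x}. 1 / real k) / ln (real x)) \<longlonglongrightarrow> d"

end

theory Submission
  imports Defs "HOL-Number_Theory.Number_Theory" "HOL-Analysis.Analysis"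
begin


lemma pf_finite: "finite {S. product_free n S}"
proof -
  have "{S. product_free n S} \<subseteq> Pow {0..<n}" by (auto simp: product_free_def)
  thus ?thesis by (rule finite_subset) simp
qed

lemma pf_empty: "product_free n {}" by (simp add: product_free_def)

lemma D_ge: "product_free n S \<Longrightarrow> real (card S) / real n \<le> D n"
  unfolding D_def by (rule Max_ge) (use pf_finite in auto)

lemma D_le: assumes "\<And>S. product_free n S \<Longrightarrow> real (card S) / real n \<le> c"
  shows "D n \<le> c"
  unfolding D_def using pf_finite pf_empty assms by (subst Max_le_iff) auto

lemma D_prime_le: assumes p: "prime (p::nat)" shows "D p \<le> 1/2"
proof (rule D_le)
  fix S assume pf: "product_free p S"
  have p1: "p > 1" using p prime_gt_1_nat by blast
  have Ssub: "S \<subseteq> {0..<p}" using pf by (auto simp: product_free_def)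
  have "2 * card S \<le> p"
  proof (cases "S = {}")
    case True thus ?thesis by simp
  next
    case False
    then obtain s where s: "s \<in> S" by blast
    have nf: "\<And>a b c. a \<in> S \<Longrightarrow> b \<in> S \<Longrightarrow> c \<in> S \<Longrightarrow> (a * b) mod p \<noteq> c mod p"
      using pf by (auto simp: product_free_def)
    have z: "0 \<notin> S" using nf[of 0 0 0] by auto
    have sp: "0 < s" "s < p" using s z Ssub by (auto intro: gr0I)
    have cop: "coprime p s" using sp p by (simp add: prime_nat_iff'' )
    define f where "f x = (s * x) mod p" for x
    have inj: "inj_on f S"
    proof
      fix x y assume xy: "x \<in> S" "y \<in> S" "f x = f y"
      hence "[s * x = s * y] (mod p)" by (simp add: f_def Cong.cong_def)
      hence "[x = y] (mod p)" using cop
        by (metis cong_mult_lcancel_nat coprime_commute)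
      thus "x = y" using xy Ssub by (auto simp: Cong.cong_def subset_iff)
    qed
    have img: "f ` S \<subseteq> {1..<p}"
    proof
      fix y assume "y \<in> f ` S"
      then obtain x where x: "x \<in> S" "y = f x" by blast
      have "x \<noteq> 0" using x z by (metis)
      hence "0 < x" "x < p" using x Ssub by (auto simp: subset_iff)
      hence "\<not> p dvd s * x" using p sp
        by (metis dvd_imp_le not_less prime_dvd_mult_iff)
      hence "y \<noteq> 0" using x by (simp add: f_def mod_eq_0_iff_dvd)
      moreover have "y < p" using x p1 by (simp add: f_def)
      ultimately show "y \<in> {1..<p}" by auto
    qed
    have disj: "S \<inter> f ` S = {}"
    proof (rule ccontr)
      assume "S \<inter> f ` S \<noteq> {}"
      then obtain x where x: "x \<in> S" "f x \<in> S" by blast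
      hence "(s * x) mod p = (f x) mod p" by (simp add: f_def)
      thus False using nf[OF s x(1) x(2)] by simp
    qed
    have S1: "S \<subseteq> {1..<p}" using Ssub z by (force simp: Suc_le_eq intro: gr0I)
    have "card (S \<union> f ` S) \<le> card {1..<p::nat}"
      by (rule card_mono) (use S1 img in auto)
    moreover have "card (S \<union> f ` S) = card S + card S"
      using disj inj by (subst card_Un_disjoint) (auto intro: finite_subset[OF S1] simp: card_image)
    ultimately show ?thesis by simp
  qed
  hence "real (card S) \<le> real p / 2" by linarith
  thus "real (card S) / real p \<le> 1/2" using p1 by (simp add: field_simps)
qed



lemma D_lift:
  assumes qn: "q dvd n" and n: "0 < n" and pf: "product_free q S0"
  shows "real (card S0) / real q \<le> D n"
proof -
  have q: "0 < q" using qn n by (auto intro: gr0I)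
  obtain m where m: "n = q * m" using qn by blast
  have m0: "0 < m" using m n by (auto intro: gr0I)
  have S0: "S0 \<subseteq> {0..<q}" using pf by (simp add: product_free_def)
  define S where "S = {x. x < n \<and> x mod q \<in> S0}"
  have pfS: "product_free n S"
    unfolding product_free_def
  proof safe
    fix x assume "x \<in> S" thus "x \<in> {0..<n}" by (simp add: S_def)
  next
    fix a b c assume abc: "a \<in> S" "b \<in> S" "c \<in> S" "(a * b) mod n = c mod n"
    have "(a * b) mod q = c mod q" using abc(4) qn by (metis mod_mod_cancel)
    hence "((a mod q) * (b mod q)) mod q = (c mod q) mod q" by (simp add: mod_mult_eq)
    thus False using pf abc(1-3) unfolding product_free_def S_def by blast
  qed
  have inj: "inj_on (\<lambda>(y,t). y + q * t) (S0 \<times> {..<m})"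
  proof (rule inj_onI, clarsimp)
    fix y t y' t' assume h: "y \<in> S0" "t < m" "y' \<in> S0" "t' < m" "y + q * t = y' + q * t'"
    have yq: "y < q" "y' < q" using h S0 by auto
    have "(y + q * t) mod q = y" "(y' + q * t') mod q = y'" using yq by simp_all
    hence "y = y'" using h by simp
    moreover have "(y + q * t) div q = t" "(y' + q * t') div q = t'" using yq q by simp_all
    ultimately show "y = y' \<and> t = t'" using h by metis
  qed
  have img: "(\<lambda>(y,t). y + q * t) ` (S0 \<times> {..<m}) = S"
  proof safe
    fix y t assume h: "y \<in> S0" "t < m"
    have yq: "y < q" using h S0 by auto
    have "y + q * t < q + q * t" using yq by simp
    also have "\<dots> = q * (t+1)" by simp
    also have "\<dots> \<le> q * m" using h by (intro mult_le_mono2) simp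
    finally show "y + q * t \<in> S" using h yq m by (simp add: S_def)
  next
    fix x assume x: "x \<in> S"
    have "x = x mod q + q * (x div q)" by simp
    moreover have "x div q < m" using x m q by (simp add: S_def less_mult_imp_div_less mult.commute)
    ultimately show "x \<in> (\<lambda>(y,t). y + q * t) ` (S0 \<times> {..<m})" using x
      by (intro image_eqI[of _ _ "(x mod q, x div q)"]) (auto simp: S_def)
  qed
  have "card S = card S0 * m" using card_image[OF inj] img by (simp add: card_cartesian_product)
  hence "real (card S) / real n = real (card S0) / real q" using m m0 q by (simp add: field_simps)
  thus ?thesis using D_ge[OF pfS] by simp
qed



lemma pow_cancel_dvd:
  assumes "prime (p::nat)" "p^(k+1) dvd p^k * w" shows "p dvd w"
proof -
  have "p^k * p dvd p^k * w" using assms(2) by (simp add: mult.commute)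
  thus ?thesis using assms(1) by (simp add: prime_gt_0_nat)
qed

lemma gen_pf_core:
  fixes p e a s k u v w :: nat
  assumes p: "prime p" and e: "1 \<le> e" and ea: "e \<le> a" and kb: "k + e \<le> a"
    and B1: "\<And>u. bad u \<Longrightarrow> \<not> p dvd u"
    and B2: "\<And>u w. [u = w] (mod p^e) \<Longrightarrow> bad u = bad w"
    and B3: "\<And>u v. bad u \<Longrightarrow> bad v \<Longrightarrow> \<not> bad (u * v)"
    and bu: "bad u" and bv: "bad v" and bw: "bad w"
    and eq: "(p^s * (u * v)) mod p^a = (p^k * w) mod p^a"
  shows False
proof -
  let ?X = "p^s * (u * v)" and ?Y = "p^k * w"
  have cg: "[?X = ?Y] (mod p^a)" using eq by (simp add: Cong.cong_def)
  have T: "\<And>d. d dvd p^a \<Longrightarrow> (d dvd ?X \<longleftrightarrow> d dvd ?Y)"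
    using cg by (meson cong_dvd_iff cong_dvd_modulus_nat)
  have nw: "\<not> p^(k+1) dvd ?Y" using pow_cancel_dvd[OF p] B1[OF bw] by blast
  have nuv: "\<not> p dvd u * v" using B1 bu bv p by (simp add: prime_dvd_mult_iff)
  have p1: "p > 1" using p prime_gt_1_nat by blast
  show False
  proof (cases "k < s")
    case True
    have "p^(k+1) dvd ?X" using True by (intro dvd_mult2 le_imp_power_dvd) simp
    moreover have "p^(k+1) dvd p^a" using kb e by (intro le_imp_power_dvd) simp
    ultimately show False using T nw by blast
  next
    case False
    show False
    proof (cases "s < k")
      case True
      have "p^(s+1) dvd ?Y" using True by (intro dvd_mult2 le_imp_power_dvd) simp
      moreover have "p^(s+1) dvd p^a" using kb e True by (intro le_imp_power_dvd) simp
      ultimately have "p^(s+1) dvd ?X" using T by blast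
      thus False using pow_cancel_dvd[OF p] nuv by blast
    next
      case False
      hence ks: "k = s" using \<open>\<not> k < s\<close> by simp
      have pa: "p^a = p^k * p^(a-k)" using kb by (simp add: power_add[symmetric])
      have "p^k * ((u * v) mod p^(a-k)) = p^k * (w mod p^(a-k))"
        using eq ks by (metis pa mod_mult_mult1)
      hence "(u * v) mod p^(a-k) = w mod p^(a-k)" using p1 by simp
      hence "[u * v = w] (mod p^(a-k))" by (simp add: Cong.cong_def)
      moreover have "p^e dvd p^(a-k)" using kb by (intro le_imp_power_dvd) simp
      ultimately have "[u * v = w] (mod p^e)" by (rule cong_dvd_modulus_nat)
      hence "bad (u * v)" using B2 bw by blast
      thus False using B3 bu bv by blast
    qed
  qed
qed



lemma gen_D:
  fixes p e a g :: nat
  assumes p: "prime p" and e: "1 \<le> e" and ea: "e \<le> a"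
    and B1: "\<And>u. bad u \<Longrightarrow> \<not> p dvd u"
    and B2: "\<And>u w. [u = w] (mod p^e) \<Longrightarrow> bad u = bad w"
    and B3: "\<And>u v. bad u \<Longrightarrow> bad v \<Longrightarrow> \<not> bad (u * v)"
    and g: "\<not> p dvd g" and B4: "\<And>u. \<not> p dvd u \<Longrightarrow> \<not> bad u \<Longrightarrow> bad (g * u)"
  shows "real (p^a - p^(e-1)) / (2 * real (p^a)) \<le> D (p^a)"
proof -
  define q where "q = p^a"
  define b where "b = a - e + 1"
  have p1: "p > 1" using p prime_gt_1_nat by blast
  have q0: "q > 0" using p1 by (simp add: q_def)
  define S0 where "S0 = {x. x < q \<and> (\<exists>j u. j < b \<and> x = p^j * u \<and> bad u)}"
  have pf: "product_free q S0"
    unfolding product_free_def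
  proof safe
    fix x assume "x \<in> S0" thus "x \<in> {0..<q}" by (simp add: S0_def)
  next
    fix x y c assume h: "x \<in> S0" "y \<in> S0" "c \<in> S0" "(x * y) mod q = c mod q"
    from h(1) obtain i u where iu: "i < b" "x = p^i * u" "bad u" by (auto simp: S0_def)
    from h(2) obtain j v where jv: "j < b" "y = p^j * v" "bad v" by (auto simp: S0_def)
    from h(3) obtain k w where kw: "k < b" "c = p^k * w" "bad w" by (auto simp: S0_def)
    have "x * y = p^(i+j) * (u * v)" using iu jv by (simp add: power_add algebra_simps)
    hence "(p^(i+j) * (u * v)) mod p^a = (p^k * w) mod p^a" using h(4) kw by (simp add: q_def)
    moreover have "k + e \<le> a" using kw b_def ea by simp
    ultimately show False using gen_pf_core[OF p e ea _ B1 B2 B3 iu(3) jv(3) kw(3)] by blast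
  qed
  define M where "M = {x. x < q \<and> p^b dvd x}"
  define N where "N = {..<q} - M"
  have bea: "b + (e-1) = a" using e ea by (simp add: b_def)
  have pa: "p^b * p^(e-1) = q" using bea by (metis power_add q_def)
  have Mimg: "M = (\<lambda>t. p^b * t) ` {..<p^(e-1)}"
  proof safe
    fix x assume "x \<in> M"
    then obtain t where t: "x = p^b * t" "p^b * t < q" by (auto simp: M_def)
    hence "t < p^(e-1)" using pa by (metis mult_less_cancel1)
    thus "x \<in> (\<lambda>t. p^b * t) ` {..<p^(e-1)}" using t by auto
  next
    fix t assume "t < p^(e-1)"
    hence "p^b * t < p^b * p^(e-1)" using p1 by simp
    hence "p^b * t < q" using pa by metis
    thus "p^b * t \<in> M" by (simp add: M_def)
  qed
  have cardM: "card M = p^(e-1)"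
    unfolding Mimg using p1 by (subst card_image) (auto simp: inj_on_def)
  have cardN: "card N = q - p^(e-1)"
    unfolding N_def using cardM by (subst card_Diff_subset) (auto simp: M_def)
  have S0N: "S0 \<subseteq> N"
  proof
    fix x assume "x \<in> S0"
    then obtain j u where ju: "x < q" "j < b" "x = p^j * u" "bad u" by (auto simp: S0_def)
    have "\<not> p^b dvd x"
    proof
      assume "p^b dvd x"
      moreover have "p^(j+1) dvd p^b" using ju by (intro le_imp_power_dvd) simp
      ultimately have "p^(j+1) dvd p^j * u" using ju dvd_trans by blast
      thus False using pow_cancel_dvd[OF p] B1[OF ju(4)] by blast
    qed
    thus "x \<in> N" using ju by (simp add: N_def M_def)
  qed
  define f where "f x = (g * x) mod q" for x
  have copg: "coprime g q" using g p by (metis q_def coprime_power_right_iff prime_imp_coprime coprime_commute)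
  have inj: "inj_on f (N - S0)"
  proof
    fix x y assume xy: "x \<in> N - S0" "y \<in> N - S0" "f x = f y"
    hence "[g * x = g * y] (mod q)" by (simp add: f_def Cong.cong_def)
    hence "[x = y] (mod q)" using copg by (metis cong_mult_lcancel_nat coprime_commute)
    thus "x = y" using xy by (auto simp: Cong.cong_def N_def)
  qed
  have into: "f ` (N - S0) \<subseteq> S0"
  proof
    fix z assume "z \<in> f ` (N - S0)"
    then obtain x where x: "x \<in> N" "x \<notin> S0" "z = f x" by blast
    have xq: "x < q" "\<not> p^b dvd x" using x by (auto simp: N_def M_def)
    hence x0: "x \<noteq> 0" by (metis dvd_0_right)
    obtain u where u: "x = p^multiplicity p x * u" "\<not> p dvd u"
      using multiplicity_decompose'[OF x0, of p] p1 by (metis nat_dvd_1_iff_1 less_irrefl)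
    define j where "j = multiplicity p x"
    have jb: "j < b"
    proof (rule ccontr)
      assume "\<not> j < b"
      hence "p^b dvd p^j" by (intro le_imp_power_dvd) simp
      hence "p^b dvd x" using u j_def by (metis dvd_mult2)
      thus False using xq by blast
    qed
    have nbu: "\<not> bad u" using x(2) xq jb u j_def by (auto simp: S0_def)
    have bgu: "bad (g * u)" using B4 u(2) nbu by blast
    have qs: "q = p^j * p^(a-j)" using jb b_def ea by (simp add: q_def power_add[symmetric])
    have "z = (p^j * (g * u)) mod (p^j * p^(a-j))" using x(3) u j_def qs
      by (simp add: f_def algebra_simps)
    also have "\<dots> = p^j * ((g * u) mod p^(a-j))" by (rule mod_mult_mult1)
    finally have z: "z = p^j * ((g * u) mod p^(a-j))" .
    have "[(g * u) mod p^(a-j) = g * u] (mod p^(a-j))" by (simp add: Cong.cong_def)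
    moreover have "p^e dvd p^(a-j)" using jb b_def ea by (intro le_imp_power_dvd) simp
    ultimately have "[(g * u) mod p^(a-j) = g * u] (mod p^e)" by (rule cong_dvd_modulus_nat)
    hence "bad ((g * u) mod p^(a-j))" using B2 bgu by blast
    moreover have "z < q" using x(3) q0 by (simp add: f_def)
    ultimately show "z \<in> S0" using z jb by (auto simp: S0_def)
  qed
  have finS0: "finite S0" by (rule finite_subset[of _ "{..<q}"]) (auto simp: S0_def)
  have "card (N - S0) \<le> card S0" using card_inj_on_le[OF inj into finS0] .
  moreover have "card N = card (N - S0) + card S0"
    using S0N finS0 by (metis card_Diff_subset card_mono finite_subset le_add_diff_inverse2 N_def finite_Diff finite_lessThan)
  ultimately have "q - p^(e-1) \<le> 2 * card S0" using cardN by linarith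
  hence "real (q - p^(e-1)) \<le> 2 * real (card S0)" by linarith
  hence "real (q - p^(e-1)) / (2 * real q) \<le> real (card S0) / real q"
    using q0 by (simp add: field_simps)
  also have "\<dots> \<le> D q" by (rule D_ge[OF pf])
  finally show ?thesis by (simp add: q_def)
qed



lemma sq_pm1:
  fixes x :: int and p :: nat
  assumes p: "prime p" and "[x^2 = 1] (mod int p)"
  shows "[x = 1] (mod int p) \<or> [x = -1] (mod int p)"
proof -
  have "int p dvd x^2 - 1" using assms(2) by (simp add: cong_iff_dvd_diff cong_sym_eq)
  moreover have "x^2 - 1 = (x - 1) * (x + 1)" by (simp add: algebra_simps power2_eq_square)
  ultimately have "int p dvd (x - 1) * (x + 1)" by simp
  hence "int p dvd x - 1 \<or> int p dvd x + 1" using p by (simp add: prime_dvd_mult_iff)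
  thus ?thesis by (auto simp: cong_iff_dvd_diff)
qed

lemma odd_prime_power_D:
  fixes p a :: nat
  assumes p: "prime p" and odd: "odd p" and a: "1 \<le> a"
  shows "real (p^a - 1) / (2 * real (p^a)) \<le> D (p^a)"
proof -
  define h where "h = (p - 1) div 2"
  have p3: "p \<ge> 3" using prime_ge_2_nat[OF p] odd by (cases "p = 2") auto
  have h1: "h \<ge> 1" using p3 by (simp add: h_def)
  have ph: "p - 1 = 2 * h" using odd p3 by (simp add: h_def)
  have hlt: "h < p - 1" using ph h1 by simp
  define bad where "bad u \<longleftrightarrow> [int u ^ h = -1] (mod int p)" for u :: nat
  have pn1: "\<not> [(1::int) = -1] (mod int p)"
  proof
    assume "[(1::int) = -1] (mod int p)"
    hence "int p dvd 2" by (simp add: cong_iff_dvd_diff)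
    hence "p dvd 2" by (metis int_dvd_int_iff of_nat_numeral)
    thus False using p3 by (metis dvd_imp_le not_less_eq_eq numeral_3_eq_3 numeral_2_eq_2 zero_less_numeral)  
  qed
  have sq: "[int u ^ h = 1] (mod int p) \<or> [int u ^ h = -1] (mod int p)" if "\<not> p dvd u" for u
  proof -
    have "[u ^ (p-1) = 1] (mod p)" using fermat_theorem[OF p that] .
    hence "[int u ^ (p-1) = 1] (mod int p)" by (metis cong_int_iff of_nat_1 of_nat_power)
    moreover have "int u ^ (p-1) = (int u ^ h)^2" unfolding ph by (metis power_mult mult.commute)
    ultimately have "[(int u ^ h)^2 = 1] (mod int p)" by simp
    thus ?thesis by (rule sq_pm1[OF p])
  qed
  have B1: "\<not> p dvd u" if "bad u" for u
  proof
    assume "p dvd u"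
    hence "int p dvd int u" by simp
    moreover have "int u dvd int u ^ h" using h1 by (simp add: dvd_power)
    ultimately have "int p dvd int u ^ h" by (rule dvd_trans)
    hence "[int u ^ h = 0] (mod int p)" by (simp add: cong_0_iff)
    hence "[(0::int) = -1] (mod int p)" using that unfolding bad_def by (metis cong_sym cong_trans)
    hence "int p dvd 1" by (simp add: cong_iff_dvd_diff)
    thus False using p3 by simp
  qed
  have B2: "bad u = bad w" if "[u = w] (mod p^1)" for u w
  proof -
    have "[int u = int w] (mod int p)" using that by (simp add: cong_int_iff)
    hence "[int u ^ h = int w ^ h] (mod int p)" by (rule cong_pow)
    thus ?thesis unfolding bad_def by (meson cong_sym cong_trans)
  qed
  have B3: "\<not> bad (u * v)" if "bad u" "bad v" for u v
  proof
    assume "bad (u * v)"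
    have "[int u ^ h * int v ^ h = (-1) * (-1)] (mod int p)"
      using that unfolding bad_def by (rule cong_mult)
    hence "[int (u * v) ^ h = 1] (mod int p)" by (simp add: power_mult_distrib)
    hence "[(1::int) = -1] (mod int p)" using \<open>bad (u * v)\<close> unfolding bad_def
      by (meson cong_sym cong_trans)
    thus False using pn1 by blast
  qed
  obtain g where g: "residue_primroot p g" using prime_primitive_root_exists[OF _ p] prime_gt_1_nat[OF p] by blast
  have gc: "coprime p g" and ordg: "ord p g = p - 1"
    using g p by (auto simp: residue_primroot_def totient_prime)
  have gnd: "\<not> p dvd g" using gc p by (metis coprime_absorb_left not_prime_unit)
  have "\<not> [g ^ h = 1] (mod p)"
  proof
    assume "[g ^ h = 1] (mod p)"
    hence "ord p g dvd h" by (simp add: ord_divides')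
    thus False using ordg hlt h1 by (auto dest: dvd_imp_le)
  qed
  hence "\<not> [int g ^ h = 1] (mod int p)" by (metis cong_int_iff of_nat_1 of_nat_power)
  hence bg: "bad g" using sq[OF gnd] by (simp add: bad_def)
  have B4: "bad (g * u)" if "\<not> p dvd u" "\<not> bad u" for u
  proof -
    have u1: "[int u ^ h = 1] (mod int p)" using sq[OF that(1)] that(2) by (simp add: bad_def)
    have "[int g ^ h * int u ^ h = (-1) * 1] (mod int p)"
      using bg u1 unfolding bad_def by (rule cong_mult)
    thus ?thesis by (simp add: bad_def power_mult_distrib)
  qed
  have "real (p^a - p^(1-1)) / (2 * real (p^a)) \<le> D (p^a)"
    apply (rule gen_D[where p=p and e=1 and bad=bad and g=g])
    using p a B1 B2 B3 gnd B4 by auto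
  thus ?thesis by simp
qed

lemma two_power_D:
  fixes a :: nat
  assumes a: "2 \<le> a"
  shows "real (2^a - 2) / (2 * real ((2::nat)^a)) \<le> D (2^a)"
proof -
  define bad where "bad u \<longleftrightarrow> u mod 4 = 3" for u :: nat
  have B1: "\<not> 2 dvd u" if "bad u" for u using that unfolding bad_def by presburger
  have B2: "bad u = bad w" if "[u = w] (mod 2^2)" for u w using that by (simp add: bad_def Cong.cong_def)
  have B3: "\<not> bad (u * v)" if "bad u" "bad v" for u v
  proof -
    have "(u * v) mod 4 = ((u mod 4) * (v mod 4)) mod 4" by (simp add: mod_mult_eq)
    thus ?thesis using that by (simp add: bad_def)
  qed
  have B4: "bad (3 * u)" if "\<not> 2 dvd u" "\<not> bad u" for u
  proof -
    have "u mod 4 = 1" using that unfolding bad_def by presburger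
    have "(3 * u) mod 4 = (3 * (u mod 4)) mod 4" by (simp add: mod_mult_right_eq)
    hence "(3 * u) mod 4 = 3" using \<open>u mod 4 = 1\<close> by simp
    thus ?thesis by (simp add: bad_def)
  qed
  have "real (2^a - 2^(2-1)) / (2 * real ((2::nat)^a)) \<le> D (2^a)"
    apply (rule gen_D[where p=2 and e=2 and bad=bad and g=3])
    using a B1 B2 B3 B4 by auto
  thus ?thesis by simp
qed



lemma aux_ineq: "(x::real) \<ge> 3 \<Longrightarrow> 1/2 - 1/x \<le> (x-1)/(2 * x)"
  by (simp add: field_simps)

lemma pp_D:
  assumes p: "prime (p::nat)" and a: "1 \<le> a" and q3: "p^a \<ge> 3"
  shows "1/2 - 1 / real (p^a) \<le> D (p^a)"
proof (cases "p = 2")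
  case True
  have "a \<ge> 2"
  proof (rule ccontr)
    assume "\<not> a \<ge> 2" hence "a = 1" using a by simp
    thus False using q3 True by simp
  qed
  hence "real (2^a - 2) / (2 * real ((2::nat)^a)) \<le> D (2^a)" by (rule two_power_D)
  moreover have "real ((2::nat)^a - 2) = real ((2::nat)^a) - 2" using q3 True by (simp add: of_nat_diff)
  moreover have "real ((2::nat)^a) > 0" by simp
  ultimately show ?thesis using True by (simp add: field_simps)
next
  case False
  have odd: "odd p"
  proof
    assume "even p" hence "2 dvd p" by simp
    thus False using primes_dvd_imp_eq[OF two_is_prime_nat p] False by simp
  qed
  have "real (p^a - 1) / (2 * real (p^a)) \<le> D (p^a)" by (rule odd_prime_power_D[OF p odd a])
  moreover have "real (p^a - 1) = real (p^a) - 1" using q3 by (simp add: of_nat_diff)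
  moreover have "real (p^a) \<ge> 3" using q3 by linarith
  ultimately have "(real (p^a) - 1) / (2 * real (p^a)) \<le> D (p^a)" by simp
  moreover have "1/2 - 1 / real (p^a) \<le> (real (p^a) - 1) / (2 * real (p^a))"
    using aux_ineq[OF \<open>real (p^a) \<ge> 3\<close>] .
  ultimately show ?thesis by linarith
qed

lemma D_mono_dvd: assumes "q dvd n" "0 < n" shows "D q \<le> D n"
proof -
  have "D q \<in> (\<lambda>S. real (card S) / real q) ` {S. product_free q S}"
    unfolding D_def using pf_finite pf_empty by (intro Max_in) auto
  then obtain S where "product_free q S" "D q = real (card S) / real q" by blast
  thus ?thesis using D_lift[OF assms] by simp
qed

lemma big_pp:
  assumes n: "n > fact Q"
  shows "\<exists>p. prime p \<and> p ^ multiplicity p n > Q"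
proof (rule ccontr)
  assume "\<not> ?thesis"
  hence all: "\<And>p. prime p \<Longrightarrow> p ^ multiplicity p n \<le> Q" by (auto simp: not_less)
  have n0: "n \<noteq> 0" using n by auto
  have "n dvd fact Q"
  proof (rule multiplicity_le_imp_dvd[OF n0])
    fix p :: nat assume p: "prime p"
    have "0 < p ^ multiplicity p n" using prime_gt_0_nat[OF p] by simp
    hence "1 \<le> p ^ multiplicity p n" by linarith
    hence "p ^ multiplicity p n dvd fact Q" using all[OF p] by (intro dvd_fact)
    thus "multiplicity p n \<le> multiplicity p (fact Q)"
      using p by (subst (asm) power_dvd_iff_le_multiplicity) (auto simp: fact_nonzero)
  qed
  hence "n \<le> fact Q" by (intro dvd_imp_le) auto
  thus False using n by simp
qed

lemma eventually_D:
  assumes r: "r < 1/2"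
  shows "\<exists>N. \<forall>n\<ge>N. D n > r"
proof -
  define Q :: nat where "Q = nat \<lceil>1 / (1/2 - r)\<rceil> + 3"
  have Q3: "Q \<ge> 3" by (simp add: Q_def)
  have "1 / (1/2 - r) \<le> real Q" unfolding Q_def by linarith
  moreover have d: "1/2 - r > 0" using r by simp
  ultimately have "1 \<le> real Q * (1/2 - r)" by (simp add: divide_le_eq)
  hence Qr: "1 / real Q \<le> 1/2 - r" using Q3 by (simp add: divide_le_eq mult.commute)
  show ?thesis
  proof (intro exI allI impI)
    fix n :: nat assume nN: "(fact Q :: nat) + 1 \<le> n"
    hence "n > fact Q" by linarith
    then obtain p where p: "prime p" and pq: "p ^ multiplicity p n > Q" using big_pp by blast
    define m where "m = multiplicity p n"
    have m1: "1 \<le> m"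
    proof (rule ccontr)
      assume "\<not> 1 \<le> m" hence "m = 0" by simp
      thus False using pq Q3 m_def by simp
    qed
    have qd: "p^m dvd n" by (simp add: m_def multiplicity_dvd)
    have n0: "0 < n" using nN by simp
    have q3: "p^m \<ge> 3" using pq Q3 m_def by simp
    have "1/2 - 1 / real (p^m) \<le> D (p^m)" by (rule pp_D[OF p m1 q3])
    also have "\<dots> \<le> D n" by (rule D_mono_dvd[OF qd n0])
    finally have a: "1/2 - 1 / real (p^m) \<le> D n" .
    have "real Q < real (p^m)" using pq m_def by simp
    moreover have "0 < real Q" using Q3 by simp
    ultimately have "1 / real (p^m) < 1 / real Q" by (simp add: frac_less2)
    thus "D n > r" using a Qr by linarith
  qed
qed



lemma harm_ln_lim: "(\<lambda>x. (harm x - c) / ln (real x)) \<longlonglongrightarrow> (1::real)"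
proof -
  have lnat: "filterlim (\<lambda>x::nat. ln (real x)) at_top sequentially"
    by (rule filterlim_compose[OF ln_at_top filterlim_real_sequentially])
  have "(\<lambda>x. (harm x - ln (real x) - c) / ln (real x)) \<longlonglongrightarrow> (0::real)"
    by (rule tendsto_divide_0[OF tendsto_diff[OF euler_mascheroni_LIMSEQ tendsto_const]])
       (rule filterlim_at_top_imp_at_infinity[OF lnat])
  hence "(\<lambda>x. 1 + (harm x - ln (real x) - c) / ln (real x)) \<longlonglongrightarrow> (1 + 0::real)"
    by (intro tendsto_add tendsto_const)
  moreover have "eventually (\<lambda>x. 1 + (harm x - ln (real x) - c) / ln (real x) = (harm x - c) / ln (real x)) sequentially"
    using eventually_ge_at_top[of 2]
  proof eventually_elim
    case (elim x)
    hence "ln (real x) > 0" by simp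
    thus ?case by (simp add: field_simps)
  qed
  ultimately show ?thesis by (simp add: tendsto_cong)
qed

lemma density_parts:
  fixes A :: "nat set"
  assumes sub: "{1..} - A \<subseteq> {..<N}"
  shows "has_natural_density A 1" "has_log_density A 1"
proof -
  have cle: "card (A \<inter> {1..x}) \<le> x" for x
    using card_mono[of "{1..x}" "A \<inter> {1..x}"] by simp
  have cge: "x \<le> card (A \<inter> {1..x}) + N" for x
  proof -
    have "{1..x} \<subseteq> (A \<inter> {1..x}) \<union> {..<N}" using sub by auto
    hence "card {1..x} \<le> card ((A \<inter> {1..x}) \<union> {..<N})" by (intro card_mono) auto
    also have "\<dots> \<le> card (A \<inter> {1..x}) + card {..<N}" by (rule card_Un_le)
    finally show ?thesis by simp
  qed
  show "has_natural_density A 1"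
    unfolding has_natural_density_def
  proof (rule tendsto_sandwich[of "\<lambda>x. 1 - real N / real x" _ _ "\<lambda>x. 1"])
    show "eventually (\<lambda>x. 1 - real N / real x \<le> real (card (A \<inter> {1..x})) / real x) sequentially"
      using eventually_ge_at_top[of 1]
    proof eventually_elim
      case (elim x)
      have le: "real x - real N \<le> real (card (A \<inter> {1..x}))" using cge[of x] by linarith
      have xp: "real x > 0" using elim by simp
      have "1 - real N / real x = (real x - real N) / real x" using xp by (simp add: field_simps)
      also have "\<dots> \<le> real (card (A \<inter> {1..x})) / real x" using le xp by (intro divide_right_mono) auto
      finally show ?case .
    qed
    show "eventually (\<lambda>x. real (card (A \<inter> {1..x})) / real x \<le> 1) sequentially"
      using eventually_ge_at_top[of 1]
    proof eventually_elim
      case (elim x)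
      thus ?case using cle[of x] by (simp add: field_simps)
    qed
    have "(\<lambda>x. real N / real x) \<longlonglongrightarrow> 0"
      by (rule tendsto_divide_0[OF tendsto_const])
         (rule filterlim_at_top_imp_at_infinity[OF filterlim_real_sequentially])
    hence "(\<lambda>x. 1 - real N / real x) \<longlonglongrightarrow> 1 - 0" by (intro tendsto_diff tendsto_const)
    thus "(\<lambda>x. 1 - real N / real x) \<longlonglongrightarrow> 1" by simp
  qed simp
  define C where "C = (\<Sum>k\<in>{1..<N}. 1 / real k)"
  have split: "(\<Sum>k\<in>A \<inter> {1..x}. 1 / real k) = harm x - (\<Sum>k\<in>{1..x} - A. 1 / real k)" for x
  proof -
    have "harm x = (\<Sum>k\<in>{1..x}. 1 / real k)" by (simp add: harm_def inverse_eq_divide)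
    also have "\<dots> = (\<Sum>k\<in>{1..x} \<inter> A. 1 / real k) + (\<Sum>k\<in>{1..x} - A. 1 / real k)"
      by (rule sum.Int_Diff) simp
    finally show ?thesis by (simp add: Int_commute)
  qed
  have r0: "0 \<le> (\<Sum>k\<in>{1..x} - A. 1 / real k)" for x by (intro sum_nonneg) simp
  have rC: "(\<Sum>k\<in>{1..x} - A. 1 / real k) \<le> C" for x
    unfolding C_def by (rule sum_mono2) (use sub in auto)
  show "has_log_density A 1"
    unfolding has_log_density_def
  proof (rule tendsto_sandwich[of "\<lambda>x. (harm x - C) / ln (real x)" _ _ "\<lambda>x. (harm x - 0) / ln (real x)"])
    show "eventually (\<lambda>x. (harm x - C) / ln (real x) \<le> (\<Sum>k\<in>A \<inter> {1..x}. 1 / real k) / ln (real x)) sequentially"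
      using eventually_ge_at_top[of 2]
    proof eventually_elim
      case (elim x)
      hence "ln (real x) > 0" by simp
      thus ?case unfolding split using rC[of x] by (intro divide_right_mono) auto
    qed
    show "eventually (\<lambda>x. (\<Sum>k\<in>A \<inter> {1..x}. 1 / real k) / ln (real x) \<le> (harm x - 0) / ln (real x)) sequentially"
      using eventually_ge_at_top[of 2]
    proof eventually_elim
      case (elim x)
      hence "ln (real x) > 0" by simp
      thus ?case unfolding split using r0[of x] by (intro divide_right_mono) auto
    qed
  qed (rule harm_ln_lim)+
qed

theorem proposition5p1:
  shows "liminf (\<lambda>n. ereal (D n)) = ereal (1/2) \<and>
         (\<forall>u::real. 0 \<le> u \<and> u < 1/2 \<longrightarrow>
           finite ({1..} - {n::nat. n \<ge> 1 \<and> D n > u})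
         \<and> has_natural_density {n::nat. n \<ge> 1 \<and> D n > u} 1
         \<and> has_log_density {n::nat. n \<ge> 1 \<and> D n > u} 1)"
proof (intro conjI allI impI)
  show "liminf (\<lambda>n. ereal (D n)) = ereal (1/2)"
  proof (rule antisym)
    show "liminf (\<lambda>n. ereal (D n)) \<le> ereal (1/2)"
    proof (rule Liminf_least)
      fix P assume "eventually P sequentially"
      then obtain N where N: "\<And>n. n \<ge> N \<Longrightarrow> P n" by (auto simp: eventually_sequentially)
      obtain p where p: "prime p" "N < p" using bigger_prime by blast
      have "ereal (D p) \<in> (\<lambda>n. ereal (D n)) ` Collect P" using N[of p] p by auto
      moreover have "ereal (D p) \<le> ereal (1/2)" using D_prime_le[OF p(1)] by simp
      ultimately show "Inf ((\<lambda>n. ereal (D n)) ` Collect P) \<le> ereal (1/2)" by (rule Inf_lower2)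
    qed
    show "ereal (1/2) \<le> liminf (\<lambda>n. ereal (D n))"
      unfolding liminf_bounded_iff
    proof (intro allI impI)
      fix B :: ereal assume B: "B < ereal (1/2)"
      show "\<exists>N. \<forall>n\<ge>N. B < ereal (D n)"
      proof (cases B)
        case (real r)
        hence "r < 1/2" using B by simp
        then obtain N where "\<forall>n\<ge>N. D n > r" using eventually_D by blast
        thus ?thesis using real by auto
      qed (use B in auto)
    qed
  qed
next
  fix u :: real assume u: "0 \<le> u \<and> u < 1/2"
  then obtain N where N: "\<forall>n\<ge>N. D n > u" using eventually_D by blast
  have sub: "{1..} - {n::nat. n \<ge> 1 \<and> D n > u} \<subseteq> {..<N}" using N by (auto simp: not_less)
  thus "finite ({1..} - {n::nat. n \<ge> 1 \<and> D n > u})" by (rule finite_subset) simp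
  show "has_natural_density {n::nat. n \<ge> 1 \<and> D n > u} 1" by (rule density_parts(1)[OF sub])
  show "has_log_density {n::nat. n \<ge> 1 \<and> D n > u} 1" by (rule density_parts(2)[OF sub])
qed

end
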